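(* Let $s \geq 0$ be real, let $u$ be a zero-mean trigonometric polynomial on $\mathbb{T}^d$ (or more generally a zero-mean function regular enough for all sums below to converge absolutely), and let $v = \overline{u}$. Define \[ Z_6(u) := \langle \Lambda^s (W_5)_1(u,v), \Lambda^s v\rangle + \langle \Lambda^s u, \Lambda^s (W_5)_2(u,v)\rangle . \] Then \[ Z_6(u) = \frac{3i}{32}\sum_{\substack{j,\ell,k\in\mathbb{Z}^d\setminus\{0\}\\ |k| = |j|+|\ell|}} \big(u_ju_{-j}u_\ell u_{-\ell}v_kv_{-k} - v_jv_{-j}v_\ell v_{-\ell}u_ku_{-k}\big)\,|j|\,|\ell|\,|k|\,\big(|k|^{2s} - |j|^{2s} - |\ell|^{2s}\big). \] In particular $Z_6(u) = 0$ for $s = \frac12$, while for $s=1$ the factor $|k|^{2s}-|j|^{2s}-|\ell|^{2s}$ equals $2|j||\ell|$ on the set of summation.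
   Context: $\mathbb{T}^d = (\mathbb{R}/2\pi\mathbb{Z})^d$. Zero-mean functions are written $u = \sum_{j\in\mathbb{Z}^d\setminus\{0\}} u_j e^{ij\cdot x}$; $|\cdot|$ is the Euclidean norm. $\Lambda^s$ is the Fourier multiplier $e^{ij\cdot x}\mapsto |j|^s e^{ij\cdot x}$. The pairing is the (normalized) bilinear form $\langle w,h\rangle := \sum_{j\neq0} w_j h_{-j}$. $\delta_a^b = 1$ if $a=b$ and $0$ otherwise; a quotient of the form $(1-\delta_a^b)/(a-b)$ is defined to be $0$ when $a=b$. All sums run over $j,\ell,k \in \mathbb{Z}^d\setminus\{0\}$ subject to the indicated constraints. For complex-conjugate pairs $(u,v)$, $v=\overline u$ (so $v_j = \overline{u_{-j}}$), \[ (W_5)_1(u,v) = \tfrac{i}{32}\!\!\sum_{|j|=|\ell|}\!\! u_ju_{-j}v_\ell v_{-\ell}u_k e^{ik\cdot x}|j|^2|\ell|^2\Big(\tfrac{1}{|j|+|k|} - \tfrac{1-\delta_{|\ell|}^{|k|}}{|\ell|-|k|}\Big) + \tfrac{3i}{32}\!\!\sum_{|k|=|j|+|\ell|}\!\! u_ju_{-j}u_\ell u_{-\ell}v_k e^{ik\cdot x}|j||\ell||k| \] \[ + \tfrac{i}{16}\!\!\sum_{|j|=|k|}\!\! u_ju_{-j}u_\ell v_{-\ell}v_k e^{ik\cdot x}|j|^2|\ell|\Big(6 + \tfrac{|\ell|}{|\ell|+|j|} + \tfrac{|\ell|(1-\delta_{|\ell|}^{|j|})}{|\ell|-|j|}\Big)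 + \tfrac{3i}{16}\!\!\sum_{|k|=|j|-|\ell|}\!\! u_ju_{-j}v_\ell v_{-\ell}v_k e^{ik\cdot x}|j||\ell||k|, \] and $(W_5)_2(u,v)$ is obtained from $(W_5)_1(u,v)$ by exchanging the roles of $u$ and $v$ everywhere and multiplying by $-1$ (equivalently, $(W_5)_2(u,\overline u) = \overline{(W_5)_1(u,\overline u)}$). *)

theory Defs
  imports "HOL-Analysis.Analysis"
begin

text \<open>Fourier side: a function on the torus T^d is represented by its coefficient map
  j \<mapsto> u_j on the lattice int^'d (the dimension d is the cardinality of the finite type 'd).\<close>

type_synonym 'd coeffs = "(int ^ ('d::finite)) \<Rightarrow> complex"

definition fnorm :: "int ^ 'd::finite \<Rightarrow> real" where
  "fnorm j = sqrt (\<Sum>i\<in>UNIV. (real_of_int (j $ i))^2)"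

definition kdelta :: "real \<Rightarrow> real \<Rightarrow> real" where
  "kdelta a b = (if a = b then 1 else 0)"

definition dquot :: "real \<Rightarrow> real \<Rightarrow> real" where
  "dquot a b = (if a = b then 0 else (1 - kdelta a b) / (a - b))"

definition trig_poly0 :: "'d::finite coeffs \<Rightarrow> bool" where
  "trig_poly0 u \<longleftrightarrow> finite {j. u j \<noteq> 0} \<and> u 0 = 0"

text \<open>coefficients of conj u: (conj u)_j = conj (u_{-j})\<close>
definition conjc :: "'d::finite coeffs \<Rightarrow> 'd coeffs" where
  "conjc u = (\<lambda>j. cnj (u (- j)))"

definition Lam :: "real \<Rightarrow> 'd::finite coeffs \<Rightarrow> 'd coeffs" where
  "Lam s w = (\<lambda>j. complex_of_real (fnorm j powr s) * w j)"

definition pairing :: "'d::finite coeffs \<Rightarrow> 'd coeffs \<Rightarrow> complex" where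
  "pairing w h = (\<Sum>\<^sub>\<infinity>j\<in>{j. j \<noteq> 0}. w j * h (- j))"

definition W51 :: "'d::finite coeffs \<Rightarrow> 'd coeffs \<Rightarrow> 'd coeffs" where
  "W51 u v = (\<lambda>k.
     \<i> / 32 * (\<Sum>\<^sub>\<infinity>(j,l)\<in>{(j,l). j \<noteq> 0 \<and> l \<noteq> 0 \<and> fnorm j = fnorm l}.
        u j * u (-j) * v l * v (-l) * u k *
        complex_of_real ((fnorm j)^2 * (fnorm l)^2 *
          (1 / (fnorm j + fnorm k) - dquot (fnorm l) (fnorm k))))
   + 3 * \<i> / 32 * (\<Sum>\<^sub>\<infinity>(j,l)\<in>{(j,l). j \<noteq> 0 \<and> l \<noteq> 0 \<and> fnorm k = fnorm j + fnorm l}.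
        u j * u (-j) * u l * u (-l) * v k *
        complex_of_real (fnorm j * fnorm l * fnorm k))
   + \<i> / 16 * (\<Sum>\<^sub>\<infinity>(j,l)\<in>{(j,l). j \<noteq> 0 \<and> l \<noteq> 0 \<and> fnorm j = fnorm k}.
        u j * u (-j) * u l * v (-l) * v k *
        complex_of_real ((fnorm j)^2 * fnorm l *
          (6 + fnorm l / (fnorm l + fnorm j) + fnorm l * dquot (fnorm l) (fnorm j))))
   + 3 * \<i> / 16 * (\<Sum>\<^sub>\<infinity>(j,l)\<in>{(j,l). j \<noteq> 0 \<and> l \<noteq> 0 \<and> fnorm k = fnorm j - fnorm l}.
        u j * u (-j) * v l * v (-l) * v k *
        complex_of_real (fnorm j * fnorm l * fnorm k)))"

definition W52 :: "'d::finite coeffs \<Rightarrow> 'd coeffs \<Rightarrow> 'd coeffs" where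
  "W52 u v = (\<lambda>k. - W51 v u k)"

definition Z6 :: "real \<Rightarrow> 'd::finite coeffs \<Rightarrow> complex" where
  "Z6 s u = (let v = conjc u in
     pairing (Lam s (W51 u v)) (Lam s v) + pairing (Lam s u) (Lam s (W52 u v)))"

definition Z6_rhs :: "real \<Rightarrow> 'd::finite coeffs \<Rightarrow> complex" where
  "Z6_rhs s u = (let v = conjc u in
     3 * \<i> / 32 * (\<Sum>\<^sub>\<infinity>(j,l,k)\<in>{(j,l,k). j \<noteq> 0 \<and> l \<noteq> 0 \<and> k \<noteq> 0 \<and> fnorm k = fnorm j + fnorm l}.
       (u j * u (-j) * u l * u (-l) * v k * v (-k) - v j * v (-j) * v l * v (-l) * u k * u (-k)) *
       complex_of_real (fnorm j * fnorm l * fnorm k *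
         (fnorm k powr (2 * s) - fnorm j powr (2 * s) - fnorm l powr (2 * s)))))"

end

theory Submission
  imports Defs
begin

lemma fnorm_neg[simp]: "fnorm (- j) = fnorm j"
  by (simp add: fnorm_def)

lemma fnorm_ge0[simp]: "fnorm j \<ge> 0"
  by (simp add: fnorm_def sum_nonneg)

lemma infsum_single:
  assumes "finite F" "0 \<notin> F" "\<And>j. j \<notin> F \<Longrightarrow> f j = 0"
  shows "(\<Sum>\<^sub>\<infinity>j\<in>{j. j \<noteq> 0}. f j) = (\<Sum>j\<in>F. f j)"
proof -
  have "(\<Sum>\<^sub>\<infinity>j\<in>{j. j \<noteq> 0}. f j) = (\<Sum>\<^sub>\<infinity>j\<in>F. f j)"
    by (rule infsum_cong_neutral) (use assms in auto)
  then show ?thesis using assms by simp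
qed

lemma infsum_pairs:
  assumes "finite F" "0 \<notin> F" "\<And>j l. j \<notin> F \<or> l \<notin> F \<Longrightarrow> f j l = 0"
  shows "(\<Sum>\<^sub>\<infinity>(j,l)\<in>{(j,l). j \<noteq> 0 \<and> l \<noteq> 0 \<and> P j l}. f j l)
     = (\<Sum>j\<in>F. \<Sum>l\<in>F. if P j l then f j l else 0)"
proof -
  have "(\<Sum>\<^sub>\<infinity>(j,l)\<in>{(j,l). j \<noteq> 0 \<and> l \<noteq> 0 \<and> P j l}. f j l)
      = (\<Sum>\<^sub>\<infinity>x\<in>F \<times> F. (\<lambda>(j,l). if P j l then f j l else 0) x)"
    by (rule infsum_cong_neutral) (use assms in \<open>auto split: if_splits\<close>)
  also have "\<dots> = (\<Sum>x\<in>F \<times> F. (\<lambda>(j,l). if P j l then f j l else 0) x)"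
    using assms by simp
  also have "\<dots> = (\<Sum>j\<in>F. \<Sum>l\<in>F. if P j l then f j l else 0)"
    by (simp add: sum.cartesian_product)
  finally show ?thesis .
qed

lemma infsum_triples:
  assumes "finite F" "0 \<notin> F" "\<And>j l k. j \<notin> F \<or> l \<notin> F \<or> k \<notin> F \<Longrightarrow> f j l k = 0"
  shows "(\<Sum>\<^sub>\<infinity>(j,l,k)\<in>{(j,l,k). j \<noteq> 0 \<and> l \<noteq> 0 \<and> k \<noteq> 0 \<and> P j l k}. f j l k)
     = (\<Sum>j\<in>F. \<Sum>l\<in>F. \<Sum>k\<in>F. if P j l k then f j l k else 0)"
proof -
  have "(\<Sum>\<^sub>\<infinity>(j,l,k)\<in>{(j,l,k). j \<noteq> 0 \<and> l \<noteq> 0 \<and> k \<noteq> 0 \<and> P j l k}. f j l k)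
      = (\<Sum>\<^sub>\<infinity>x\<in>F \<times> F \<times> F. (\<lambda>(j,l,k). if P j l k then f j l k else 0) x)"
    by (rule infsum_cong_neutral) (use assms in \<open>auto split: if_splits\<close>)
  also have "\<dots> = (\<Sum>x\<in>F \<times> F \<times> F. (\<lambda>(j,l,k). if P j l k then f j l k else 0) x)"
    using assms by simp
  also have "\<dots> = (\<Sum>j\<in>F. \<Sum>l\<in>F. \<Sum>k\<in>F. if P j l k then f j l k else 0)"
    by (simp add: sum.cartesian_product)
  finally show ?thesis .
qed

lemma inner_swap: "(\<Sum>k\<in>F. \<Sum>j\<in>F. \<Sum>l\<in>F. f k j l) = (\<Sum>k\<in>F. \<Sum>j\<in>F. \<Sum>l\<in>F. f k l j)"
  by (rule sum.cong[OF refl], rule sum.swap)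

lemma outer_swap: "(\<Sum>k\<in>F. \<Sum>j\<in>F. \<Sum>l\<in>F. f k j l) = (\<Sum>k\<in>F. \<Sum>j\<in>F. \<Sum>l\<in>F. f j k l)"
  by (rule sum.swap)

lemma neg_reindex: fixes F :: "'a::group_add set" assumes "\<And>j. j \<in> F \<Longrightarrow> - j \<in> F"
  shows "(\<Sum>l\<in>F. f l) = (\<Sum>l\<in>F. f (- l))"
  by (rule sum.reindex_bij_witness[of _ uminus uminus]) (use assms in auto)

lemma triple_cong:
  "(\<And>k j l. k \<in> F \<Longrightarrow> j \<in> F \<Longrightarrow> l \<in> F \<Longrightarrow> f k j l = g k j l) \<Longrightarrow>
   (\<Sum>k\<in>F. \<Sum>j\<in>F. \<Sum>l\<in>F. f k j l) = (\<Sum>k\<in>F. \<Sum>j\<in>F. \<Sum>l\<in>F. g k j l)"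
  by (intro sum.cong refl) auto


definition S1 :: "(int^'d::finite) set \<Rightarrow> 'd coeffs \<Rightarrow> 'd coeffs \<Rightarrow> int^'d \<Rightarrow> complex" where
 "S1 F a b k = (\<Sum>j\<in>F. \<Sum>l\<in>F. if fnorm j = fnorm l then
        a j * a (-j) * b l * b (-l) * a k *
        complex_of_real ((fnorm j)^2 * (fnorm l)^2 *
          (1 / (fnorm j + fnorm k) - dquot (fnorm l) (fnorm k))) else 0)"
definition S2 :: "(int^'d::finite) set \<Rightarrow> 'd coeffs \<Rightarrow> 'd coeffs \<Rightarrow> int^'d \<Rightarrow> complex" where
 "S2 F a b k = (\<Sum>j\<in>F. \<Sum>l\<in>F. if fnorm k = fnorm j + fnorm l then
        a j * a (-j) * a l * a (-l) * b k *
        complex_of_real (fnorm j * fnorm l * fnorm k) else 0)"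
definition S3 :: "(int^'d::finite) set \<Rightarrow> 'd coeffs \<Rightarrow> 'd coeffs \<Rightarrow> int^'d \<Rightarrow> complex" where
 "S3 F a b k = (\<Sum>j\<in>F. \<Sum>l\<in>F. if fnorm j = fnorm k then
        a j * a (-j) * a l * b (-l) * b k *
        complex_of_real ((fnorm j)^2 * fnorm l *
          (6 + fnorm l / (fnorm l + fnorm j) + fnorm l * dquot (fnorm l) (fnorm j))) else 0)"
definition S4 :: "(int^'d::finite) set \<Rightarrow> 'd coeffs \<Rightarrow> 'd coeffs \<Rightarrow> int^'d \<Rightarrow> complex" where
 "S4 F a b k = (\<Sum>j\<in>F. \<Sum>l\<in>F. if fnorm k = fnorm j - fnorm l then
        a j * a (-j) * b l * b (-l) * b k *
        complex_of_real (fnorm j * fnorm l * fnorm k) else 0)"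

lemma W51_fin:
  assumes F: "finite F" "0 \<notin> F" and a: "\<And>j. j \<notin> F \<Longrightarrow> a j = 0" and b: "\<And>j. j \<notin> F \<Longrightarrow> b j = 0"
  shows "W51 a b k = \<i> / 32 * S1 F a b k + 3 * \<i> / 32 * S2 F a b k + \<i> / 16 * S3 F a b k + 3 * \<i> / 16 * S4 F a b k"
  unfolding W51_def S1_def S2_def S3_def S4_def
  by (subst infsum_pairs[OF F], use a b in force)+ (rule refl)


lemma expand2:
  fixes p x y :: complex
  shows "p * ((\<Sum>j\<in>F. \<Sum>l\<in>F. f j l) * x - y * (\<Sum>j\<in>F. \<Sum>l\<in>F. g j l))
     = (\<Sum>j\<in>F. \<Sum>l\<in>F. p * (f j l * x) - p * (y * g j l))"
  by (simp add: sum_distrib_left sum_distrib_right sum_subtractf right_diff_distrib)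

lemma sub3: "(\<Sum>k\<in>F. \<Sum>j\<in>F. \<Sum>l\<in>F. (P k j l - Q k j l :: complex))
   = (\<Sum>k\<in>F. \<Sum>j\<in>F. \<Sum>l\<in>F. P k j l) - (\<Sum>k\<in>F. \<Sum>j\<in>F. \<Sum>l\<in>F. Q k j l)"
  by (simp add: sum_subtractf)

lemma zero_by_swap:
  assumes "\<And>k j l. k\<in>F \<Longrightarrow> j\<in>F \<Longrightarrow> l\<in>F \<Longrightarrow> Q k j l = P k l j"
  shows "(\<Sum>k\<in>F. \<Sum>j\<in>F. \<Sum>l\<in>F. (P k j l - Q k j l :: complex)) = 0"
proof -
  have "(\<Sum>k\<in>F. \<Sum>j\<in>F. \<Sum>l\<in>F. Q k j l) = (\<Sum>k\<in>F. \<Sum>j\<in>F. \<Sum>l\<in>F. P k l j)"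
    by (rule triple_cong) (rule assms)
  also have "\<dots> = (\<Sum>k\<in>F. \<Sum>j\<in>F. \<Sum>l\<in>F. P k j l)"
    by (rule inner_swap[symmetric])
  finally show ?thesis by (simp add: sub3)
qed

lemma zero_by_outer_neg:
  fixes F :: "'a::group_add set"
  assumes sym: "\<And>j. j \<in> F \<Longrightarrow> - j \<in> F"
  assumes "\<And>k j l. k\<in>F \<Longrightarrow> j\<in>F \<Longrightarrow> l\<in>F \<Longrightarrow> Q k j l = P j k (- l)"
  shows "(\<Sum>k\<in>F. \<Sum>j\<in>F. \<Sum>l\<in>F. (P k j l - Q k j l :: complex)) = 0"
proof -
  have "(\<Sum>k\<in>F. \<Sum>j\<in>F. \<Sum>l\<in>F. Q k j l) = (\<Sum>k\<in>F. \<Sum>j\<in>F. \<Sum>l\<in>F. P j k (- l))"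
    by (rule triple_cong) (rule assms)
  also have "\<dots> = (\<Sum>k\<in>F. \<Sum>j\<in>F. \<Sum>l\<in>F. P j k l)"
    by (rule sum.cong[OF refl], rule sum.cong[OF refl], rule neg_reindex[OF sym, symmetric])
  also have "\<dots> = (\<Sum>k\<in>F. \<Sum>j\<in>F. \<Sum>l\<in>F. P k j l)"
    by (rule outer_swap[symmetric])
  finally show ?thesis by (simp add: sub3)
qed

definition Aq :: "'d::finite coeffs \<Rightarrow> int^'d \<Rightarrow> int^'d \<Rightarrow> int^'d \<Rightarrow> complex" where
  "Aq u j l k = u j * u (-j) * u l * u (-l) * conjc u k * conjc u (-k)"
definition Bq :: "'d::finite coeffs \<Rightarrow> int^'d \<Rightarrow> int^'d \<Rightarrow> int^'d \<Rightarrow> complex" where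
  "Bq u j l k = conjc u j * conjc u (-j) * conjc u l * conjc u (-l) * u k * u (-k)"
definition Gt :: "'d::finite coeffs \<Rightarrow> int^'d \<Rightarrow> int^'d \<Rightarrow> int^'d \<Rightarrow> complex" where
  "Gt u j l k = (if fnorm k = fnorm j + fnorm l then
      (Aq u j l k - Bq u j l k) * complex_of_real (fnorm j * fnorm l * fnorm k) else 0)"

lemma Gt_sym: "Gt u l j k = Gt u j l k"
  unfolding Gt_def Aq_def Bq_def by (simp add: ac_simps)


lemma pp: "complex_of_real (x powr s) * complex_of_real (x powr s) = complex_of_real (x powr (2 * s))"
proof -
  have "x powr s * x powr s = x powr (2 * s)" by (simp add: powr_add[symmetric])
  then show ?thesis by (metis of_real_mult)
qed

lemma Z6_fin:
  fixes u :: "'d::finite coeffs"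
  assumes F: "finite F" "0 \<notin> F" and sym: "\<And>j. j \<in> F \<Longrightarrow> - j \<in> F"
    and hu: "\<And>j. j \<notin> F \<Longrightarrow> u j = 0"
  shows "Z6 s u = (\<Sum>k\<in>F. complex_of_real (fnorm k powr (2 * s)) *
      (W51 u (conjc u) k * conjc u (-k) - u k * W51 (conjc u) u (-k)))"
proof -
  have hv: "conjc u j = 0" if "j \<notin> F" for j
  proof -
    have "- j \<notin> F" using sym that by force
    then show ?thesis by (simp add: conjc_def hu)
  qed
  have e1: "pairing (Lam s (W51 u (conjc u))) (Lam s (conjc u)) =
     (\<Sum>k\<in>F. Lam s (W51 u (conjc u)) k * Lam s (conjc u) (-k))"
    unfolding pairing_def
    by (rule infsum_single[OF F]) (simp add: Lam_def conjc_def hu)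
  have e2: "pairing (Lam s u) (Lam s (W52 u (conjc u))) =
     (\<Sum>k\<in>F. Lam s u k * Lam s (W52 u (conjc u)) (-k))"
    unfolding pairing_def
    by (rule infsum_single[OF F]) (simp add: Lam_def hu)
  show ?thesis
    unfolding Z6_def Let_def e1 e2 sum.distrib[symmetric]
  proof (rule sum.cong[OF refl])
    fix k :: "int^'d"
    let ?c = "complex_of_real (fnorm k powr s)"
    have "Lam s (W51 u (conjc u)) k * Lam s (conjc u) (- k) + Lam s u k * Lam s (W52 u (conjc u)) (- k)
      = (?c * ?c) * (W51 u (conjc u) k * conjc u (-k) - u k * W51 (conjc u) u (-k))"
      by (simp add: Lam_def W52_def algebra_simps)
    also have "\<dots> = complex_of_real (fnorm k powr (2 * s)) *
      (W51 u (conjc u) k * conjc u (-k) - u k * W51 (conjc u) u (-k))"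
      by (simp only: pp)
    finally show "Lam s (W51 u (conjc u)) k * Lam s (conjc u) (- k) + Lam s u k * Lam s (W52 u (conjc u)) (- k)
      = complex_of_real (fnorm k powr (2 * s)) *
      (W51 u (conjc u) k * conjc u (-k) - u k * W51 (conjc u) u (-k))" .
  qed
qed


lemma main_id:
  fixes u :: "'d::finite coeffs"
  assumes F: "finite F" "0 \<notin> F" and sym: "\<And>j. j \<in> F \<Longrightarrow> - j \<in> F"
    and hu: "\<And>j. j \<notin> F \<Longrightarrow> u j = 0"
  shows "Z6 s u = Z6_rhs s u"
proof -
  define v where "v = conjc u"
  have hv: "v j = 0" if "j \<notin> F" for j
  proof -
    have "- j \<notin> F" using sym that by force
    then show ?thesis by (simp add: v_def conjc_def hu)
  qed
  define p where "p k = complex_of_real (fnorm k powr (2 * s))" for k :: "int^'d"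
  have W1: "W51 u v k = \<i> / 32 * S1 F u v k + 3 * \<i> / 32 * S2 F u v k + \<i> / 16 * S3 F u v k + 3 * \<i> / 16 * S4 F u v k" for k
    by (rule W51_fin[OF F hu hv])
  have W2: "W51 v u k = \<i> / 32 * S1 F v u k + 3 * \<i> / 32 * S2 F v u k + \<i> / 16 * S3 F v u k + 3 * \<i> / 16 * S4 F v u k" for k
    by (rule W51_fin[OF F hv hu])
  define D1 where "D1 = (\<Sum>k\<in>F. p k * (S1 F u v k * v (-k) - u k * S1 F v u (-k)))"
  define D2 where "D2 = (\<Sum>k\<in>F. p k * (S2 F u v k * v (-k) - u k * S2 F v u (-k)))"
  define D3 where "D3 = (\<Sum>k\<in>F. p k * (S3 F u v k * v (-k) - u k * S3 F v u (-k)))"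
  define D4 where "D4 = (\<Sum>k\<in>F. p k * (S4 F u v k * v (-k) - u k * S4 F v u (-k)))"
  have Zd: "Z6 s u = \<i>/32 * D1 + 3*\<i>/32 * D2 + \<i>/16 * D3 + 3*\<i>/16 * D4"
  proof -
    have "Z6 s u = (\<Sum>k\<in>F. p k * (W51 u v k * v (-k) - u k * W51 v u (-k)))"
      unfolding p_def v_def by (rule Z6_fin[OF F sym hu])
    also have "\<dots> = (\<Sum>k\<in>F. \<i>/32 * (p k * (S1 F u v k * v (-k) - u k * S1 F v u (-k)))
       + 3*\<i>/32 * (p k * (S2 F u v k * v (-k) - u k * S2 F v u (-k)))
       + \<i>/16 * (p k * (S3 F u v k * v (-k) - u k * S3 F v u (-k)))
       + 3*\<i>/16 * (p k * (S4 F u v k * v (-k) - u k * S4 F v u (-k))))"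
      by (rule sum.cong[OF refl], simp only: W1 W2, algebra)
    also have "\<dots> = \<i>/32 * D1 + 3*\<i>/32 * D2 + \<i>/16 * D3 + 3*\<i>/16 * D4"
      unfolding D1_def D2_def D3_def D4_def by (simp add: sum.distrib sum_distrib_left)
    finally show ?thesis .
  qed
  have D1: "D1 = 0"
    unfolding D1_def S1_def expand2
    by (rule zero_by_swap) (simp add: ac_simps)
  have D3: "D3 = 0"
    unfolding D3_def S3_def expand2
    by (rule zero_by_outer_neg[OF sym]) (auto simp add: p_def ac_simps)
  have D2: "D2 = (\<Sum>k\<in>F. \<Sum>j\<in>F. \<Sum>l\<in>F. p k * Gt u j l k)"
    unfolding D2_def S2_def expand2
    by (rule triple_cong) (simp add: Gt_def Aq_def Bq_def v_def[symmetric] algebra_simps)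
  have D4a: "D4 = (\<Sum>k\<in>F. \<Sum>j\<in>F. \<Sum>l\<in>F. - (p k * Gt u k l j))"
    unfolding D4_def S4_def expand2
    by (rule triple_cong) (auto simp add: Gt_def Aq_def Bq_def v_def[symmetric] algebra_simps)
  have D4: "D4 = - (\<Sum>k\<in>F. \<Sum>j\<in>F. \<Sum>l\<in>F. p j * Gt u j l k)"
    unfolding D4a outer_swap[of "\<lambda>k j l. - (p k * Gt u k l j)"] by (simp add: sum_negf)
  have Tjl: "(\<Sum>k\<in>F. \<Sum>j\<in>F. \<Sum>l\<in>F. p j * Gt u j l k) = (\<Sum>k\<in>F. \<Sum>j\<in>F. \<Sum>l\<in>F. p l * Gt u j l k)"
    by (subst inner_swap) (simp add: Gt_sym)
  have R: "Z6_rhs s u = 3*\<i>/32 * (\<Sum>k\<in>F. \<Sum>j\<in>F. \<Sum>l\<in>F. (p k - p j - p l) * Gt u j l k)"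
  proof -
    have "Z6_rhs s u = 3*\<i>/32 * (\<Sum>j\<in>F. \<Sum>l\<in>F. \<Sum>k\<in>F.
       if fnorm k = fnorm j + fnorm l then
       (u j * u (-j) * u l * u (-l) * v k * v (-k) - v j * v (-j) * v l * v (-l) * u k * u (-k)) *
       complex_of_real (fnorm j * fnorm l * fnorm k *
         (fnorm k powr (2 * s) - fnorm j powr (2 * s) - fnorm l powr (2 * s))) else 0)"
      unfolding Z6_rhs_def Let_def v_def[symmetric]
      by (subst infsum_triples[OF F]) (auto simp: hu hv)
    also have "\<dots> = 3*\<i>/32 * (\<Sum>k\<in>F. \<Sum>j\<in>F. \<Sum>l\<in>F. (p k - p j - p l) * Gt u j l k)"
      apply (subst inner_swap, subst outer_swap)
      apply (rule arg_cong[where f="\<lambda>x. 3*\<i>/32 * x"])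
      apply (rule triple_cong)
      apply (simp add: Gt_def Aq_def Bq_def v_def[symmetric] p_def algebra_simps)
      done
    finally show ?thesis .
  qed
  have Sp: "(\<Sum>k\<in>F. \<Sum>j\<in>F. \<Sum>l\<in>F. (p k - p j - p l) * Gt u j l k)
     = (\<Sum>k\<in>F. \<Sum>j\<in>F. \<Sum>l\<in>F. p k * Gt u j l k) - (\<Sum>k\<in>F. \<Sum>j\<in>F. \<Sum>l\<in>F. p j * Gt u j l k)
       - (\<Sum>k\<in>F. \<Sum>j\<in>F. \<Sum>l\<in>F. p l * Gt u j l k)"
    by (simp add: sum_subtractf left_diff_distrib)
  show ?thesis
    unfolding Zd R D1 D3 D2 D4 Sp
    unfolding Tjl by (simp add: algebra_simps)
qed


theorem mainTheorem6:
  fixes u :: "(int ^ 'd::finite) \<Rightarrow> complex" and s :: real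
  assumes "s \<ge> 0" and "trig_poly0 u"
  shows "Z6 s u = Z6_rhs s u
         \<and> Z6 (1/2) u = 0
         \<and> (\<forall>(j::int ^ 'd) (l::int ^ 'd) (k::int ^ 'd). fnorm k = fnorm j + fnorm l \<longrightarrow>
              fnorm k powr 2 - fnorm j powr 2 - fnorm l powr 2 = 2 * fnorm j * fnorm l)"
proof -
  define S where "S = {j. u j \<noteq> 0}"
  define F where "F = S \<union> uminus ` S"
  have fin: "finite F" using assms(2) unfolding trig_poly0_def F_def S_def by simp
  have z: "0 \<notin> F" using assms(2) unfolding trig_poly0_def F_def S_def by auto
  have sym: "- j \<in> F" if "j \<in> F" for j
    using that unfolding F_def by (auto simp: image_iff)
  have hu: "u j = 0" if "j \<notin> F" for j using that unfolding F_def S_def by auto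
  have id: "Z6 s' u = Z6_rhs s' u" for s' by (rule main_id[OF fin z sym hu])
  have half: "Z6_rhs (1/2) u = 0"
    unfolding Z6_rhs_def Let_def
    by (subst infsum_0) auto
  have pw: "fnorm k powr 2 - fnorm j powr 2 - fnorm l powr 2 = 2 * fnorm j * fnorm l"
    if "fnorm k = fnorm j + fnorm l" for j l k :: "int^'d"
    using that by (simp add: powr_numeral power2_eq_square algebra_simps)
  show ?thesis using id half pw by auto
qed

end
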